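(* Let $h,m$ be positive integers and let $f:\mathbb N\to\mathbb N$ be an increasing computable function such that for every satisfiable $\mathrm{CC}^h[m]$-circuit $\Gamma$ with $n$ inputs, among $2^{f(|\Gamma|)}$ independent uniformly random tuples from $\{0,1\}^n$ there is, with probability at least $1/2$, a tuple on which $\Gamma$ outputs $1$. Then $f^{-1}(n)\le\gamma_{h,m}(n+1)$ (for every $n$ for which $\gamma_{h,m}(n+1)$ is defined).
   Context: For an integer $m\ge 1$ and $A\subseteq\{0,\dots,m-1\}$, a gate $\mathrm{MOD}_m^A$ takes finitely many Boolean inputs (counted with multiplicity) and outputs $1$ if their sum modulo $m$ lies in $A$, and $0$ otherwise. A $\mathrm{CC}^h[m]$-circuit is a depth-$h$ Boolean circuit all of whose gates are of the form $\mathrm{MOD}_m^A$ ($A$ may vary between gates), with Boolean variable inputs and multiple wires allowed. $|\Gamma|$ is the number of gates of $\Gamma$. $\gamma_{h,m}(n)$ is the size of the smallest $\mathrm{CC}^h[m]$-circuit computing the $n$-ary conjunction $\mathrm{AND}_n$ (partial function). For an increasing function $f$, $f^{-1}(k)$ is the largest $n$ with $f(n)\le k$. *)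

theory Defs
  imports "HOL-Probability.Probability_Mass_Function"
begin

text \<open>A gate MOD_m^A: its accepting set A, the list of input variables feeding it
  (with multiplicity) and the list of earlier gates feeding it (with multiplicity).
  A circuit with n inputs is a nonempty list of gates in topological order;
  gate i may only read variables v < n and gates j < i.\<close>

datatype gate = Gate (gacc: "nat set") (gvars: "nat list") (ggates: "nat list")

definition gate_val :: "nat \<Rightarrow> bool list \<Rightarrow> bool list \<Rightarrow> gate \<Rightarrow> bool" where
  "gate_val m x prev g =
     ((length (filter (\<lambda>v. x ! v) (gvars g)) + length (filter (\<lambda>j. prev ! j) (ggates g))) mod m
        \<in> gacc g)"

definition gate_vals :: "nat \<Rightarrow> bool list \<Rightarrow> gate list \<Rightarrow> bool list" where
  "gate_vals m x gs = foldl (\<lambda>prev g. prev @ [gate_val m x prev g]) [] gs"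

definition circ_eval :: "nat \<Rightarrow> gate list \<Rightarrow> bool list \<Rightarrow> bool" where
  "circ_eval m gs x = last (gate_vals m x gs)"

definition gate_depths :: "gate list \<Rightarrow> nat list" where
  "gate_depths gs = foldl (\<lambda>ds g. ds @ [Suc (Max (insert 0 ((\<lambda>j. ds ! j) ` set (ggates g))))]) [] gs"

definition circ_depth :: "gate list \<Rightarrow> nat" where
  "circ_depth gs = Max (insert 0 (set (gate_depths gs)))"

definition wf_circ :: "nat \<Rightarrow> nat \<Rightarrow> gate list \<Rightarrow> bool" where
  "wf_circ m n gs \<longleftrightarrow> gs \<noteq> [] \<and>
     (\<forall>i<length gs. gacc (gs ! i) \<subseteq> {..<m} \<and> (\<forall>v\<in>set (gvars (gs ! i)). v < n)
                     \<and> (\<forall>j\<in>set (ggates (gs ! i)). j < i))"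

definition is_CC :: "nat \<Rightarrow> nat \<Rightarrow> nat \<Rightarrow> gate list \<Rightarrow> bool" where
  "is_CC h m n gs \<longleftrightarrow> wf_circ m n gs \<and> circ_depth gs \<le> h"

definition computes_AND :: "nat \<Rightarrow> nat \<Rightarrow> gate list \<Rightarrow> bool" where
  "computes_AND m n gs \<longleftrightarrow> (\<forall>x. length x = n \<longrightarrow> circ_eval m gs x = (\<forall>b\<in>set x. b))"

definition gamma_defined :: "nat \<Rightarrow> nat \<Rightarrow> nat \<Rightarrow> bool" where
  "gamma_defined h m n \<longleftrightarrow> (\<exists>gs. is_CC h m n gs \<and> computes_AND m n gs)"

definition gamma :: "nat \<Rightarrow> nat \<Rightarrow> nat \<Rightarrow> nat" where
  "gamma h m n = (LEAST s. \<exists>gs. is_CC h m n gs \<and> computes_AND m n gs \<and> length gs = s)"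

definition satisfiable :: "nat \<Rightarrow> nat \<Rightarrow> gate list \<Rightarrow> bool" where
  "satisfiable m n gs \<longleftrightarrow> (\<exists>x. length x = n \<and> circ_eval m gs x)"

text \<open>K independent uniformly random tuples from {0,1}^n.\<close>
definition sample_space :: "nat \<Rightarrow> nat \<Rightarrow> bool list list set" where
  "sample_space n K = {ts. length ts = K \<and> (\<forall>t\<in>set ts. length t = n)}"

definition hit_prob :: "nat \<Rightarrow> nat \<Rightarrow> gate list \<Rightarrow> nat \<Rightarrow> real" where
  "hit_prob m n gs K = measure_pmf.prob (pmf_of_set (sample_space n K))
      {ts. \<exists>t\<in>set ts. circ_eval m gs t}"

end

theory Submission
  imports Defs
begin

lemma boollists_fin: "finite {xs::bool list. length xs = d}"
  and boollists_card: "card {xs::bool list. length xs = d} = 2 ^ d"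
proof -
  have e: "{xs::bool list. length xs = d} = {xs. set xs \<subseteq> UNIV \<and> length xs = d}" by auto
  show "finite {xs::bool list. length xs = d}" unfolding e by (rule finite_lists_length_eq) simp
  show "card {xs::bool list. length xs = d} = 2 ^ d" unfolding e
    by (subst card_lists_length_eq) simp_all
qed

lemma ss_eq: "sample_space d K = {ts. set ts \<subseteq> {xs::bool list. length xs = d} \<and> length ts = K}"
  unfolding sample_space_def by auto

lemma ss_fin: "finite (sample_space d K)"
  unfolding ss_eq by (rule finite_lists_length_eq[OF boollists_fin])

lemma ss_card: "card (sample_space d K) = (2 ^ d) ^ K"
  unfolding ss_eq by (simp add: card_lists_length_eq[OF boollists_fin] boollists_card)

lemma ss_ne: "sample_space d K \<noteq> {}"
proof -
  have "replicate K (replicate d True) \<in> sample_space d K" unfolding sample_space_def by auto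
  thus ?thesis by blast
qed

lemma hit_card:
  assumes K: "K \<ge> 1"
  shows "card {ts \<in> sample_space d K. u \<in> set ts} \<le> K * (2 ^ d) ^ (K - 1)"
proof -
  let ?g = "\<lambda>(i::nat, us::bool list list). take i us @ u # drop i us"
  have sub: "{ts \<in> sample_space d K. u \<in> set ts} \<subseteq> ?g ` ({..<K} \<times> sample_space d (K - 1))"
  proof
    fix ts assume "ts \<in> {ts \<in> sample_space d K. u \<in> set ts}"
    then have ts: "length ts = K" "\<forall>t\<in>set ts. length t = d" "u \<in> set ts"
      unfolding sample_space_def by auto
    then obtain i where i: "i < length ts" "ts ! i = u" by (metis in_set_conv_nth)
    define us where "us = take i ts @ drop (Suc i) ts"
    have "take i us = take i ts" "drop i us = drop (Suc i) ts" using i unfolding us_def by auto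
    hence "ts = ?g (i, us)" using i id_take_nth_drop[OF i(1)] by simp
    moreover have "us \<in> sample_space d (K - 1)" using ts i unfolding us_def sample_space_def
      by (auto dest: in_set_takeD in_set_dropD)
    ultimately show "ts \<in> ?g ` ({..<K} \<times> sample_space d (K - 1))" using i ts by blast
  qed
  have "card {ts \<in> sample_space d K. u \<in> set ts} \<le> card (?g ` ({..<K} \<times> sample_space d (K - 1)))"
    by (rule card_mono[OF _ sub]) (simp add: ss_fin)
  also have "\<dots> \<le> card ({..<K} \<times> sample_space d (K - 1))" by (rule card_image_le) (simp add: ss_fin)
  also have "\<dots> = K * (2 ^ d) ^ (K - 1)" by (simp add: card_cartesian_product ss_card)
  finally show ?thesis .
qed

lemma AND_eval:
  assumes "computes_AND m d gs" "length t = d"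
  shows "circ_eval m gs t \<longleftrightarrow> t = replicate d True"
proof -
  have "circ_eval m gs t = (\<forall>b\<in>set t. b)" using assms unfolding computes_AND_def by auto
  also have "\<dots> \<longleftrightarrow> t = replicate d True" using assms(2)
    by (metis (full_types) in_set_replicate replicate_length_same set_replicate_Suc list.set_intros(1) length_replicate in_set_conv_nth nth_replicate)
  finally show ?thesis .
qed

lemma hit_bound:
  assumes "computes_AND m d gs" "K \<ge> 1"
  shows "hit_prob m d gs K \<le> real K / 2 ^ d"
proof -
  let ?S = "sample_space d K" and ?u = "replicate d True"
  have eq: "?S \<inter> {ts. \<exists>t\<in>set ts. circ_eval m gs t} = {ts \<in> ?S. ?u \<in> set ts}"
    using AND_eval[OF assms(1)] unfolding sample_space_def by auto
  have "hit_prob m d gs K = card {ts \<in> ?S. ?u \<in> set ts} / card ?S"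
    unfolding hit_prob_def by (simp add: measure_pmf_of_set[OF ss_ne ss_fin] eq)
  also have "\<dots> \<le> real (K * (2 ^ d) ^ (K - 1)) / card ?S"
    by (rule divide_right_mono) (use of_nat_mono[OF hit_card[OF assms(2), of d ?u]] in \<open>simp_all only: of_nat_0_le_iff\<close>)
  also have "\<dots> = real K / 2 ^ d"
  proof -
    have "(2::real) ^ d * (2 ^ d) ^ (K - 1) = (2 ^ d) ^ K" using assms(2)
      by (metis Suc_diff_le diff_Suc_1 power_Suc)
    thus ?thesis by (simp add: ss_card field_simps)
  qed
  finally show ?thesis .
qed

theorem proposition6p3:
  fixes h m :: nat and f :: "nat \<Rightarrow> nat"
  assumes "h \<ge> 1" and "m \<ge> 1"
    and "strict_mono f"
    and "\<forall>n gs. is_CC h m n gs \<and> satisfiable m n gs \<longrightarrow>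
            hit_prob m n gs (2 ^ f (length gs)) \<ge> 1/2"
  shows "\<forall>n N. gamma_defined h m (Suc n) \<longrightarrow>
            (f N \<le> n \<and> (\<forall>M. f M \<le> n \<longrightarrow> M \<le> N)) \<longrightarrow> N \<le> gamma h m (Suc n)"
proof (intro allI impI)
  fix n N
  assume gd: "gamma_defined h m (Suc n)" and N: "f N \<le> n \<and> (\<forall>M. f M \<le> n \<longrightarrow> M \<le> N)"
  let ?P = "\<lambda>s. \<exists>gs. is_CC h m (Suc n) gs \<and> computes_AND m (Suc n) gs \<and> length gs = s"
  have "\<exists>s. ?P s" using gd unfolding gamma_defined_def by blast
  hence "?P (gamma h m (Suc n))" unfolding gamma_def by (rule LeastI_ex)
  then obtain gs where gs: "is_CC h m (Suc n) gs" "computes_AND m (Suc n) gs"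
    "length gs = gamma h m (Suc n)" by blast
  have sat: "satisfiable m (Suc n) gs" unfolding satisfiable_def
    using AND_eval[OF gs(2), of "replicate (Suc n) True"]
    by (intro exI[of _ "replicate (Suc n) True"]) simp
  have hp: "hit_prob m (Suc n) gs (2 ^ f (length gs)) \<ge> 1/2" using assms(4) gs(1) sat by blast
  have fn: "n \<le> f (length gs)"
  proof (rule ccontr)
    assume "\<not> ?thesis"
    hence a: "Suc (f (length gs)) \<le> n" by simp
    have "hit_prob m (Suc n) gs (2 ^ f (length gs)) \<le> real (2 ^ f (length gs)) / 2 ^ Suc n"
      by (rule hit_bound[OF gs(2)]) simp
    also have "\<dots> \<le> 2 ^ f (length gs) / 2 ^ (f (length gs) + 2)"
    proof -
      have "(2::real)^(f (length gs)+2) \<le> 2^Suc n" using a by (intro power_increasing) auto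
      thus ?thesis by (intro frac_le) simp_all
    qed
    also have "\<dots> = 1/4" by (simp add: power_add)
    finally show False using hp by simp
  qed
  have "f N \<le> f (length gs)" using N fn by linarith
  hence "N \<le> length gs" using assms(3) by (simp add: strict_mono_less_eq)
  thus "N \<le> gamma h m (Suc n)" using gs(3) by simp
qed

end
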